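(* There exist absolute constants $\lambda_0>0$ and $C>0$ such that the following holds for every $0<\lambda\le\lambda_0$. Let $F$ be a bipartite graph with parts $V_0,V_1$, each of size $I$, such that $d_F(v)\ge(1-\lambda)I$ for every $v\in V_0\cup V_1$. Then there exists a probability distribution on perfect matchings $M$ of $F$ (viewed as sets of edges) which is $C/I$-spread, i.e. for every set $T$ of edges of $F$, $\mathbb{P}(M\supseteq T)\le (C/I)^{|T|}$.
   Context: A random set $S$ is $p$-spread if for all sets $T$, $\mathbb{P}(S\supseteq T)\le p^{|T|}$. $d_F(v)$ denotes the degree of $v$ in $F$. *)

theory Defs
  imports "HOL-Probability.Probability"
begin

text \<open>A bipartite graph with parts V0, V1 (vertices are naturals; the two parts are
  kept apart by the order in the pair) is given by its edge set
  E \<subseteq> V0 \<times> V1; an edge (a,b) joins a \<in> V0 and b \<in> V1.\<close>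

definition bip_graph :: "nat set \<Rightarrow> nat set \<Rightarrow> (nat \<times> nat) set \<Rightarrow> bool" where
  "bip_graph V0 V1 E \<longleftrightarrow> finite V0 \<and> finite V1 \<and> E \<subseteq> V0 \<times> V1"

definition deg0 :: "(nat \<times> nat) set \<Rightarrow> nat \<Rightarrow> nat" where
  "deg0 E a = card {b. (a, b) \<in> E}"

definition deg1 :: "(nat \<times> nat) set \<Rightarrow> nat \<Rightarrow> nat" where
  "deg1 E b = card {a. (a, b) \<in> E}"

definition perfect_matching ::
  "nat set \<Rightarrow> nat set \<Rightarrow> (nat \<times> nat) set \<Rightarrow> (nat \<times> nat) set \<Rightarrow> bool" where
  "perfect_matching V0 V1 E M \<longleftrightarrow> M \<subseteq> E \<and>
     (\<forall>a\<in>V0. \<exists>!b. (a, b) \<in> M) \<and> (\<forall>b\<in>V1. \<exists>!a. (a, b) \<in> M)"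

end

theory Submission
  imports Defs
begin

definition bijs :: "(nat \<times> nat) set \<Rightarrow> nat set \<Rightarrow> nat set \<Rightarrow> (nat \<Rightarrow> nat) set" where
  "bijs E A B = {s \<in> A \<rightarrow>\<^sub>E B. bij_betw s A B \<and> (\<forall>a\<in>A. (a, s a) \<in> E)}"

lemma finite_bijs: "finite A \<Longrightarrow> finite B \<Longrightarrow> finite (bijs E A B)"
proof -
  assume "finite A" "finite B"
  then have "finite (A \<rightarrow>\<^sub>E B)" by (intro finite_PiE) auto
  then show ?thesis unfolding bijs_def by (rule finite_subset[rotated]) auto
qed

lemma bij_by_card:
  assumes "finite A" "f ` A = B" "card A = card B"
  shows "bij_betw f A B"
  using assms eq_card_imp_inj_on[of A f] unfolding bij_betw_def by auto

lemma bijs_mono: "E \<subseteq> E' \<Longrightarrow> bijs E A B \<subseteq> bijs E' A B"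
  unfolding bijs_def by auto

lemma fix_bij:
  assumes fA: "finite A" and fB: "finite B" and a: "a \<in> A" and b: "b \<in> B" and ab: "(a,b) \<in> E"
  shows "bij_betw (\<lambda>s. restrict s (A - {a})) {s \<in> bijs E A B. s a = b} (bijs E (A - {a}) (B - {b}))"
proof (rule bij_betw_byWitness[where f' = "\<lambda>t. t(a := b)"])
  show "\<forall>s\<in>{s \<in> bijs E A B. s a = b}. (restrict s (A - {a}))(a := b) = s"
  proof
    fix s assume s: "s \<in> {s \<in> bijs E A B. s a = b}"
    show "(restrict s (A - {a}))(a := b) = s"
    proof
      fix x show "((restrict s (A - {a}))(a := b)) x = s x"
        using s a by (cases "x \<in> A") (auto simp: bijs_def PiE_def extensional_def)
    qed
  qed
  show "\<forall>t\<in>bijs E (A - {a}) (B - {b}). restrict (t(a := b)) (A - {a}) = t"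
  proof
    fix t assume t: "t \<in> bijs E (A - {a}) (B - {b})"
    show "restrict (t(a := b)) (A - {a}) = t"
    proof
      fix x show "restrict (t(a := b)) (A - {a}) x = t x"
        using t by (auto simp: bijs_def PiE_def extensional_def)
    qed
  qed
  show "(\<lambda>s. restrict s (A - {a})) ` {s \<in> bijs E A B. s a = b} \<subseteq> bijs E (A - {a}) (B - {b})"
  proof
    fix t assume "t \<in> (\<lambda>s. restrict s (A - {a})) ` {s \<in> bijs E A B. s a = b}"
    then obtain s where s: "s \<in> bijs E A B" "s a = b" and t: "t = restrict s (A - {a})" by auto
    have bs: "bij_betw s A B" using s by (auto simp: bijs_def)
    have "bij_betw s (A - {a}) (B - {b})"
      using bij_betw_DiffI[OF bs, of "{a}" "{b}"] a b s(2) by auto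
    then have "bij_betw t (A - {a}) (B - {b})" unfolding t
      by (rule bij_betw_cong[THEN iffD1, rotated]) auto
    moreover have "t \<in> (A - {a}) \<rightarrow>\<^sub>E (B - {b})"
      using \<open>bij_betw s (A - {a}) (B - {b})\<close> unfolding t bij_betw_def by auto
    moreover have "\<forall>x\<in>A - {a}. (x, t x) \<in> E" using s(1) unfolding t bijs_def by auto
    ultimately show "t \<in> bijs E (A - {a}) (B - {b})" unfolding bijs_def by blast
  qed
  show "(\<lambda>t. t(a := b)) ` bijs E (A - {a}) (B - {b}) \<subseteq> {s \<in> bijs E A B. s a = b}"
  proof
    fix s assume "s \<in> (\<lambda>t. t(a := b)) ` bijs E (A - {a}) (B - {b})"
    then obtain t where t: "t \<in> bijs E (A - {a}) (B - {b})" and s: "s = t(a := b)" by auto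
    have bt: "bij_betw t (A - {a}) (B - {b})" using t by (auto simp: bijs_def)
    have "s ` A = insert b (t ` (A - {a}))" unfolding s fun_upd_image if_P[OF a] by (rule refl)
    also have "t ` (A - {a}) = B - {b}" using bt by (simp add: bij_betw_def)
    also have "insert b (B - {b}) = B" using b by blast
    finally have im: "s ` A = B" .
    have eq: "card (A - {a}) = card (B - {b})" using bt by (rule bij_betw_same_card)
    have e1: "card A = Suc (card (A-{a}))" by (rule card_Suc_Diff1[OF fA a, symmetric])
    have e2: "card B = Suc (card (B-{b}))" by (rule card_Suc_Diff1[OF fB b, symmetric])
    have "card A = card B" by (simp only: e1 e2 eq)
    have "bij_betw s A B" by (rule bij_by_card) fact+
    moreover have "s \<in> A \<rightarrow>\<^sub>E B"
    proof -
      have "t \<in> extensional (A - {a})" using t unfolding bijs_def PiE_def by auto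
      then have "s \<in> extensional A" unfolding s using a by (simp add: extensional_def)
      then show ?thesis using im by (auto simp: PiE_iff)
    qed
    moreover have "\<forall>x\<in>A. (x, s x) \<in> E" using t ab unfolding s bijs_def by auto
    ultimately show "s \<in> {s \<in> bijs E A B. s a = b}" unfolding bijs_def using s by simp
  qed
qed


lemma row_exp:
  assumes fA: "finite A" and fB: "finite B" and a: "a \<in> A"
  shows "card (bijs E A B) = (\<Sum>b\<in>{b\<in>B. (a,b)\<in>E}. card (bijs E (A - {a}) (B - {b})))"
proof -
  have eq: "bijs E A B = (\<Union>b\<in>{b\<in>B. (a,b)\<in>E}. {s\<in>bijs E A B. s a = b})"
    using a by (auto simp: bijs_def PiE_iff)
  have "card (bijs E A B) = card (\<Union>b\<in>{b\<in>B. (a,b)\<in>E}. {s\<in>bijs E A B. s a = b})"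
    by (rule arg_cong[OF eq])
  also have "\<dots> = (\<Sum>b\<in>{b\<in>B. (a,b)\<in>E}. card {s\<in>bijs E A B. s a = b})"
    by (rule card_UN_disjoint) (use fA fB finite_bijs[OF fA fB, of E] in auto)
  also have "\<dots> = (\<Sum>b\<in>{b\<in>B. (a,b)\<in>E}. card (bijs E (A - {a}) (B - {b})))"
  proof (rule sum.cong[OF refl])
    fix b assume "b \<in> {b\<in>B. (a,b)\<in>E}"
    then show "card {s\<in>bijs E A B. s a = b} = card (bijs E (A - {a}) (B - {b}))"
      using fix_bij[OF fA fB a, of b E] bij_betw_same_card by blast
  qed
  finally show ?thesis .
qed

lemma card_bijs_UNIV:
  "finite A \<Longrightarrow> finite B \<Longrightarrow> card A = n \<Longrightarrow> card B = n \<Longrightarrow> card (bijs UNIV A B) = fact n"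
proof (induction n arbitrary: A B)
  case 0
  then have "A = {}" "B = {}" by auto
  then have "bijs UNIV A B = {\<lambda>_. undefined}" by (auto simp: bijs_def bij_betw_def)
  then show ?case by simp
next
  case (Suc n)
  then obtain a where a: "a \<in> A" by (metis card_eq_SucD insertI1)
  have "card (bijs UNIV A B) = (\<Sum>b\<in>{b\<in>B. (a,b)\<in>UNIV}. card (bijs UNIV (A - {a}) (B - {b})))"
    by (rule row_exp) (use Suc.prems a in auto)
  also have "\<dots> = (\<Sum>b\<in>B. fact n)"
  proof (rule sum.cong)
    fix b assume b: "b \<in> B"
    show "card (bijs UNIV (A - {a}) (B - {b})) = fact n"
      by (rule Suc.IH) (use Suc.prems a b in auto)
  qed simp
  also have "\<dots> = fact (Suc n)" using Suc.prems by simp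
  finally show ?case .
qed

lemma card_bijs_le:
  assumes "finite A" "finite B" "card A = card B"
  shows "card (bijs E A B) \<le> fact (card A)"
proof -
  have "card (bijs E A B) \<le> card (bijs UNIV A B)"
    by (rule card_mono[OF finite_bijs]) (use assms bijs_mono in auto)
  also have "\<dots> = fact (card A)" using card_bijs_UNIV assms by auto
  finally show ?thesis .
qed


lemma card_preimage_le:
  assumes "inj_on f S" "finite Z"
  shows "card {x\<in>S. f x \<in> Z} \<le> card Z"
proof -
  have "card {x\<in>S. f x \<in> Z} = card (f ` {x\<in>S. f x \<in> Z})"
    by (rule card_image[symmetric]) (rule inj_on_subset[OF assms(1)], auto)
  also have "\<dots> \<le> card Z" by (rule card_mono[OF assms(2)]) auto
  finally show ?thesis .
qed

lemma switch:
  assumes fA: "finite A" and fB: "finite B" and cAB: "card A = card B"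
    and a: "a \<in> A" and b: "b \<in> B"
    and nd0: "card (B - {y. (a,y)\<in>E}) \<le> d" and nd1: "card (A - {x. (x,b)\<in>E}) \<le> d"
  shows "card (bijs E (A - {a}) (B - {b})) * (card A - 1 - 2*d) \<le> card (bijs E A B)"
proof -
  define A' where "A' = A - {a}"
  define B' where "B' = B - {b}"
  define good where "good N = {x\<in>A'. (x,b)\<in>E \<and> (a, N x)\<in>E}" for N :: "nat \<Rightarrow> nat"
  define sw where "sw p = (fst p)(a := fst p (snd p), snd p := b)" for p :: "(nat \<Rightarrow> nat) \<times> nat"
  have fA': "finite A'" using fA by (simp add: A'_def)
  have cA': "card A' = card A - 1" using a fA by (simp add: A'_def)
  have good_card: "card (good N) \<ge> card A - 1 - 2*d" if N: "N \<in> bijs E A' B'" for N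
  proof -
    have injN: "inj_on N A'" using N by (auto simp: bijs_def bij_betw_def)
    have sub: "A' - good N \<subseteq> (A - {x. (x,b)\<in>E}) \<union> {x\<in>A'. N x \<in> B - {y. (a,y)\<in>E}}"
    proof
      fix x assume x: "x \<in> A' - good N"
      then have "x \<in> A" "N x \<in> B" using N by (auto simp: bijs_def A'_def B'_def)
      then show "x \<in> (A - {x. (x,b)\<in>E}) \<union> {x\<in>A'. N x \<in> B - {y. (a,y)\<in>E}}"
        using x by (auto simp: good_def)
    qed
    have "card (A' - good N) \<le> card (A - {x. (x,b)\<in>E}) + card {x\<in>A'. N x \<in> B - {y. (a,y)\<in>E}}"
      by (rule order.trans[OF card_mono card_Un_le]) (use sub fA fA' in auto)
    also have "\<dots> \<le> d + d" using nd1 card_preimage_le[OF injN, of "B - {y. (a,y)\<in>E}"] nd0 fB by auto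
    finally have c1: "card (A' - good N) \<le> 2*d" by simp
    have "A' = good N \<union> (A' - good N)" by (auto simp: good_def)
    then have "card A' = card (good N \<union> (A' - good N))" by simp
    then have "card A' \<le> card (good N) + card (A' - good N)" using card_Un_le by metis
    then show ?thesis using c1 cA' by linarith
  qed
  have fS: "finite (Sigma (bijs E A' B') good)"
    by (rule finite_SigmaI) (use finite_bijs fA fB in \<open>auto simp: A'_def B'_def good_def\<close>)
  have "card (bijs E A' B') * (card A - 1 - 2*d) \<le> (\<Sum>N\<in>bijs E A' B'. card (good N))"
    using sum_bounded_below[of "bijs E A' B'" "card A - 1 - 2*d" "\<lambda>N. card (good N)"] good_card
    by (simp add: mult.commute)
  also have "\<dots> = card (Sigma (bijs E A' B') good)"
    by (rule card_SigmaI[symmetric]) (use finite_bijs fA fB in \<open>auto simp: A'_def B'_def good_def\<close>)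
  also have "\<dots> \<le> card (bijs E A B)"
  proof (rule card_inj_on_le[OF _ _ finite_bijs[OF fA fB]])
    show "sw ` Sigma (bijs E A' B') good \<subseteq> bijs E A B"
    proof
      fix s assume "s \<in> sw ` Sigma (bijs E A' B') good"
      then obtain N x where N: "N \<in> bijs E A' B'" and x: "x \<in> good N" and s: "s = N(a := N x, x := b)"
        by (auto simp: sw_def)
      have xA': "x \<in> A'" and xb: "(x,b)\<in>E" and axE: "(a, N x)\<in>E" using x by (auto simp: good_def)
      have bN: "bij_betw N A' B'" and NE: "N \<in> A' \<rightarrow>\<^sub>E B'" and edges: "\<forall>z\<in>A'. (z, N z)\<in>E"
        using N by (auto simp: bijs_def)
      have imN: "N ` A' = B'" using bN by (simp add: bij_betw_def)
      have xa: "x \<noteq> a" using xA' by (simp add: A'_def)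
      have "s ` A \<subseteq> B"
      proof
        fix y assume "y \<in> s ` A"
        then obtain z where z: "z \<in> A" "y = s z" by auto
        show "y \<in> B"
        proof (cases "z = x")
          case True then show ?thesis using z s b by simp
        next
          case False
          show ?thesis
          proof (cases "z = a")
            case True then show ?thesis using z s xa False imN xA' by (auto simp: B'_def)
          next
            case False2: False
            then have "z \<in> A'" using z by (simp add: A'_def)
            then show ?thesis using z s False False2 imN by (auto simp: B'_def)
          qed
        qed
      qed
      moreover have "B \<subseteq> s ` A"
      proof
        fix y assume y: "y \<in> B"
        show "y \<in> s ` A"
        proof (cases "y = b")
          case True then show ?thesis using s xA' by (auto simp: A'_def)
        next
          case False
          then have "y \<in> N ` A'" using y imN by (simp add: B'_def)
          then obtain z where z: "z \<in> A'" "y = N z" by auto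
          show ?thesis
          proof (cases "z = x")
            case True then have "s a = y" using s xa z by simp
            then show ?thesis using a by auto
          next
            case False
            then have "s z = y" using s z by (auto simp: A'_def)
            moreover have "z \<in> A" using z by (simp add: A'_def)
            ultimately show ?thesis by (metis imageI)
          qed
        qed
      qed
      ultimately have im: "s ` A = B" by blast
      have bs: "bij_betw s A B" by (rule bij_by_card[OF fA im cAB])
      have "s \<in> extensional A" using NE s xA' a by (auto simp: PiE_def extensional_def A'_def)
      then have "s \<in> A \<rightarrow>\<^sub>E B" using im by (auto simp: PiE_iff)
      moreover have "\<forall>z\<in>A. (z, s z) \<in> E"
        using edges s xb axE xa by (auto simp: A'_def)
      ultimately show "s \<in> bijs E A B" using bs by (simp add: bijs_def)
    qed
    show "inj_on sw (Sigma (bijs E A' B') good)"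
    proof (rule inj_onI)
      fix p q assume p: "p \<in> Sigma (bijs E A' B') good" and q: "q \<in> Sigma (bijs E A' B') good"
        and eq: "sw p = sw q"
      obtain N1 x1 where p': "p = (N1, x1)" by (cases p)
      obtain N2 x2 where q': "q = (N2, x2)" by (cases q)
      have N1: "N1 \<in> bijs E A' B'" and x1: "x1 \<in> A'" using p p' by (auto simp: good_def)
      have N2: "N2 \<in> bijs E A' B'" and x2: "x2 \<in> A'" using q q' by (auto simp: good_def)
      have e: "N1(a := N1 x1, x1 := b) = N2(a := N2 x2, x2 := b)" using eq p' q' by (simp add: sw_def)
      have x1a: "x1 \<noteq> a" "x2 \<noteq> a" using x1 x2 by (auto simp: A'_def)
      have "x1 = x2"
      proof (rule ccontr)
        assume ne: "x1 \<noteq> x2"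
        have "(N2(a := N2 x2, x2 := b)) x1 = b" using e[THEN fun_cong, of x1] by simp
        then have "N2 x1 = b" using ne x1a by simp
        moreover have "N2 x1 \<in> B'" using N2 x1 by (auto simp: bijs_def PiE_iff)
        ultimately show False by (simp add: B'_def)
      qed
      moreover have "N1 = N2"
      proof
        fix z
        show "N1 z = N2 z"
        proof (cases "z = x1")
          case True
          have "(N1(a := N1 x1, x1 := b)) a = (N2(a := N2 x2, x2 := b)) a" using e by simp
          then show ?thesis using True x1a \<open>x1 = x2\<close> by simp
        next
          case False
          show ?thesis
          proof (cases "z = a")
            case True
            have "N1 \<in> extensional A'" "N2 \<in> extensional A'" using N1 N2 by (auto simp: bijs_def PiE_def)
            then show ?thesis using True by (auto simp: extensional_def A'_def)
          next
            case False2: False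
            have "(N1(a := N1 x1, x1 := b)) z = (N2(a := N2 x2, x2 := b)) z" using e by simp
            then show ?thesis using False False2 \<open>x1 = x2\<close> by simp
          qed
        qed
      qed
      ultimately show "p = q" using p' q' by simp
    qed
  qed
  finally show ?thesis by (simp add: A'_def B'_def)
qed


lemma chain:
  assumes fA: "finite A" and fB: "finite B" and cAB: "card A = card B"
    and nd0: "\<forall>a\<in>A. card (B - {y. (a,y)\<in>E}) \<le> d"
    and nd1: "\<forall>b\<in>B. card (A - {x. (x,b)\<in>E}) \<le> d"
  shows "X \<subseteq> A \<Longrightarrow> Y \<subseteq> B \<Longrightarrow> card X = t \<Longrightarrow> card Y = t \<Longrightarrow>
    card (bijs E (A - X) (B - Y)) * (\<Prod>j<t. card A - 1 - 2*d - j) \<le> card (bijs E A B)"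
proof (induction t arbitrary: X Y)
  case 0
  then have "X = {}" "Y = {}" using fA fB finite_subset by (auto simp: card_eq_0_iff)
  then show ?case by simp
next
  case (Suc t)
  have fX: "finite X" "finite Y" using Suc.prems fA fB finite_subset by auto
  obtain x where x: "x \<in> X" using Suc.prems(3) by (metis card_eq_SucD insertI1)
  obtain y where y: "y \<in> Y" using Suc.prems(4) by (metis card_eq_SucD insertI1)
  define X' where "X' = X - {x}"
  define Y' where "Y' = Y - {y}"
  have cX': "card X' = t" "card Y' = t" using Suc.prems x y fX by (auto simp: X'_def Y'_def)
  have sub': "X' \<subseteq> A" "Y' \<subseteq> B" using Suc.prems by (auto simp: X'_def Y'_def)
  have IH: "card (bijs E (A - X') (B - Y')) * (\<Prod>j<t. card A - 1 - 2*d - j) \<le> card (bijs E A B)"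
    by (rule Suc.IH[OF sub' cX'])
  have cA': "card (A - X') = card A - t" using card_Diff_subset[of X' A] sub' fX cX'
    by (simp add: X'_def)
  have cB': "card (B - Y') = card B - t" using card_Diff_subset[of Y' B] sub' fX cX'
    by (simp add: Y'_def)
  have xA: "x \<in> A - X'" using x Suc.prems by (auto simp: X'_def)
  have yB: "y \<in> B - Y'" using y Suc.prems by (auto simp: Y'_def)
  have nd0': "card ((B - Y') - {z. (x,z)\<in>E}) \<le> d"
    using nd0 xA order.trans[OF card_mono[of "B - {z. (x,z)\<in>E}" "(B - Y') - {z. (x,z)\<in>E}"]] fB
    by auto
  have nd1': "card ((A - X') - {z. (z,y)\<in>E}) \<le> d"
    using nd1 yB order.trans[OF card_mono[of "A - {z. (z,y)\<in>E}" "(A - X') - {z. (z,y)\<in>E}"]] fA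
    by auto
  have sw: "card (bijs E ((A - X') - {x}) ((B - Y') - {y})) * (card (A - X') - 1 - 2*d)
      \<le> card (bijs E (A - X') (B - Y'))"
    by (rule switch) (use fA fB cA' cB' cAB xA yB nd0' nd1' in auto)
  have e1: "(A - X') - {x} = A - X" "(B - Y') - {y} = B - Y" using x y by (auto simp: X'_def Y'_def)
  have e2: "card (A - X') - 1 - 2*d = card A - 1 - 2*d - t" using cA' by simp
  have "card (bijs E (A - X) (B - Y)) * (\<Prod>j<Suc t. card A - 1 - 2*d - j)
      = (card (bijs E (A - X) (B - Y)) * (card A - 1 - 2*d - t)) * (\<Prod>j<t. card A - 1 - 2*d - j)"
    by (simp add: mult_ac)
  also have "\<dots> \<le> card (bijs E (A - X') (B - Y')) * (\<Prod>j<t. card A - 1 - 2*d - j)"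
    using sw unfolding e1 e2 by (rule mult_right_mono) simp
  also have "\<dots> \<le> card (bijs E A B)" by (rule IH)
  finally show ?case .
qed


lemma count_inj:
  assumes fD: "finite D" and fS: "finite S"
    and C: "\<forall>a\<in>D. m \<le> card (C a) \<and> C a \<subseteq> S"
  shows "(\<Prod>j<card D. m - j) \<le> card {f \<in> D \<rightarrow>\<^sub>E S. inj_on f D \<and> (\<forall>a\<in>D. f a \<in> C a)}"
  using fD C
proof (induction D rule: finite_induct)
  case empty
  have "{f \<in> {} \<rightarrow>\<^sub>E S. inj_on f {} \<and> (\<forall>a\<in>{}. f a \<in> C a)} = {\<lambda>_. undefined}" by auto
  then show ?case by simp
next
  case (insert x D)
  define V where "V D' = {f \<in> D' \<rightarrow>\<^sub>E S. inj_on f D' \<and> (\<forall>a\<in>D'. f a \<in> C a)}" for D'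
  have IH: "(\<Prod>j<card D. m - j) \<le> card (V D)" using insert.IH insert.prems by (auto simp: V_def)
  have finV: "finite (V D')" if "finite D'" for D'
    using finite_PiE[OF that, of "\<lambda>_. S"] fS by (auto simp: V_def intro: finite_subset)
  have Cx: "m \<le> card (C x)" "C x \<subseteq> S" using insert.prems by auto
  have fCx: "finite (C x)" using Cx fS finite_subset by auto
  have "(\<Prod>j<card (insert x D). m - j) = (\<Prod>j<card D. m - j) * (m - card D)"
    using insert.hyps by simp
  also have "\<dots> \<le> card (V D) * (m - card D)" using IH by (rule mult_right_mono) simp
  also have "\<dots> \<le> (\<Sum>g\<in>V D. card (C x - g ` D))"
  proof -
    have "m - card D \<le> card (C x - g ` D)" for g
    proof -
      have "card (g ` D) \<le> card D" using insert.hyps card_image_le by blast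
      moreover have "card (C x) - card (g ` D) \<le> card (C x - g ` D)"
        using diff_card_le_card_Diff[of "g ` D" "C x"] insert.hyps by auto
      ultimately show ?thesis using Cx by linarith
    qed
    then show ?thesis using sum_bounded_below[of "V D" "m - card D" "\<lambda>g. card (C x - g ` D)"]
      by (simp add: mult.commute)
  qed
  also have "\<dots> = card (Sigma (V D) (\<lambda>g. C x - g ` D))"
    by (rule card_SigmaI[symmetric]) (use finV insert.hyps fCx in auto)
  also have "\<dots> \<le> card (V (insert x D))"
  proof (rule card_inj_on_le[OF _ _ finV])
    show "(\<lambda>p. (fst p)(x := snd p)) ` Sigma (V D) (\<lambda>g. C x - g ` D) \<subseteq> V (insert x D)"
    proof
      fix f assume "f \<in> (\<lambda>p. (fst p)(x := snd p)) ` Sigma (V D) (\<lambda>g. C x - g ` D)"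
      then obtain g y where g: "g \<in> V D" and y: "y \<in> C x" "y \<notin> g ` D" and f: "f = g(x := y)"
        by auto
      have gE: "g \<in> D \<rightarrow>\<^sub>E S" and gi: "inj_on g D" and gC: "\<forall>a\<in>D. g a \<in> C a"
        using g by (auto simp: V_def)
      have "f \<in> insert x D \<rightarrow>\<^sub>E S" using gE y Cx f by (auto simp: PiE_iff extensional_def)
      moreover have "inj_on f (insert x D)"
      proof -
        have "inj_on f D" unfolding f by (rule inj_on_fun_updI[OF gi y(2)])
        moreover have "f ` D = g ` D" using insert.hyps f by auto
        moreover have "f x = y" using f by simp
        ultimately show ?thesis using y(2) insert.hyps by auto
      qed
      moreover have "\<forall>a\<in>insert x D. f a \<in> C a" using gC y f insert.hyps by auto
      ultimately show "f \<in> V (insert x D)" by (simp add: V_def)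
    qed
    show "inj_on (\<lambda>p. (fst p)(x := snd p)) (Sigma (V D) (\<lambda>g. C x - g ` D))"
    proof (rule inj_onI)
      fix p q assume p: "p \<in> Sigma (V D) (\<lambda>g. C x - g ` D)" and q: "q \<in> Sigma (V D) (\<lambda>g. C x - g ` D)"
        and e: "(fst p)(x := snd p) = (fst q)(x := snd q)"
      have "snd p = snd q" using fun_cong[OF e, of x] by simp
      moreover have "fst p = fst q"
      proof
        fix z
        show "fst p z = fst q z"
        proof (cases "z = x")
          case True
          have "fst p \<in> extensional D" "fst q \<in> extensional D" using p q by (auto simp: V_def PiE_def)
          then show ?thesis using True insert.hyps by (auto simp: extensional_def)
        next
          case False then show ?thesis using fun_cong[OF e, of z] by simp
        qed
      qed
      ultimately show "p = q" by (simp add: prod_eq_iff)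
    qed
  qed (use insert.hyps in simp)
  finally show ?case by (simp add: V_def)
qed


definition swp :: "nat set \<Rightarrow> (nat \<Rightarrow> nat) \<Rightarrow> nat \<Rightarrow> nat" where
  "swp D f x = (if x \<in> D then f x else if x \<in> f ` D then inv_into D f x else x)"

lemma swp_props:
  assumes DA: "D \<subseteq> A" and fA: "\<forall>x\<in>D. f x \<in> A - D" and inj: "inj_on f D"
  shows "\<And>x. x \<in> A \<Longrightarrow> swp D f x \<in> A" "\<And>x. swp D f (swp D f x) = x" "bij_betw (swp D f) A A"
proof -
  show A: "swp D f x \<in> A" if "x \<in> A" for x
    using that DA fA inv_into_into[of _ f D] by (auto simp: swp_def)
  show inv: "swp D f (swp D f x) = x" for x
  proof (cases "x \<in> D")
    case True
    then have "f x \<notin> D" using fA by auto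
    then show ?thesis using True inj by (auto simp: swp_def)
  next
    case False
    show ?thesis
    proof (cases "x \<in> f ` D")
      case True
      then have "inv_into D f x \<in> D" by (rule inv_into_into)
      then show ?thesis using True False by (auto simp: swp_def f_inv_into_f)
    next
      case False2: False
      then show ?thesis using False by (auto simp: swp_def)
    qed
  qed
  show "bij_betw (swp D f) A A"
  proof (rule bij_betw_byWitness[where f' = "swp D f"])
    show "\<forall>a\<in>A. swp D f (swp D f a) = a" using inv by simp
    show "\<forall>a'\<in>A. swp D f (swp D f a') = a'" using inv by simp
    show "swp D f ` A \<subseteq> A" using A by auto
    show "swp D f ` A \<subseteq> A" using A by auto
  qed
qed


lemma card_filter_sum: "finite A \<Longrightarrow> card {x\<in>A. P x} = (\<Sum>x\<in>A. if P x then 1 else 0 :: nat)"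
  by (simp add: sum.If_cases Int_def conj_commute)

lemma markov_bad:
  assumes fA: "finite A" and fB: "finite B" and cAB: "card A = card B"
    and nd0: "\<forall>a\<in>A. card (B - {y. (a,y)\<in>E}) \<le> d"
  shows "(\<Sum>s\<in>bijs UNIV A B. card {a\<in>A. (a, s a) \<notin> E}) \<le> d * fact (card A)"
proof (cases "A = {}")
  case True then show ?thesis by simp
next
  case False
  define U where "U = bijs UNIV A B"
  have fU: "finite U" using finite_bijs fA fB by (simp add: U_def)
  have one: "card {s\<in>U. (a, s a) \<notin> E} \<le> d * fact (card A - 1)" if a: "a \<in> A" for a
  proof -
    have "{s\<in>U. (a, s a) \<notin> E} \<subseteq> (\<Union>b\<in>B - {y. (a,y)\<in>E}. {s\<in>U. s a = b})"
      using a by (auto simp: U_def bijs_def PiE_iff)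
    then have "card {s\<in>U. (a, s a) \<notin> E} \<le> card (\<Union>b\<in>B - {y. (a,y)\<in>E}. {s\<in>U. s a = b})"
      by (rule card_mono[rotated]) (use fU fB in auto)
    also have "\<dots> \<le> (\<Sum>b\<in>B - {y. (a,y)\<in>E}. card {s\<in>U. s a = b})"
      by (rule card_UN_le) (use fB in auto)
    also have "\<dots> = (\<Sum>b\<in>B - {y. (a,y)\<in>E}. fact (card A - 1))"
    proof (rule sum.cong[OF refl])
      fix b assume b: "b \<in> B - {y. (a,y)\<in>E}"
      have "card {s\<in>U. s a = b} = card (bijs UNIV (A - {a}) (B - {b}))"
        using bij_betw_same_card[OF fix_bij[OF fA fB a, of b UNIV]] b by (simp add: U_def)
      also have "\<dots> = fact (card A - 1)"
        by (rule card_bijs_UNIV) (use fA fB a b cAB in auto)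
      finally show "card {s\<in>U. s a = b} = fact (card A - 1)" .
    qed
    also have "\<dots> \<le> d * fact (card A - 1)" using nd0 a by simp
    finally show ?thesis .
  qed
  have "(\<Sum>s\<in>U. card {a\<in>A. (a, s a) \<notin> E}) = (\<Sum>s\<in>U. \<Sum>a\<in>A. if (a, s a) \<notin> E then 1 else 0)"
    using fA by (simp add: card_filter_sum)
  also have "\<dots> = (\<Sum>a\<in>A. \<Sum>s\<in>U. if (a, s a) \<notin> E then 1 else 0)" by (rule sum.swap)
  also have "\<dots> = (\<Sum>a\<in>A. card {s\<in>U. (a, s a) \<notin> E})" using fU by (simp add: card_filter_sum)
  also have "\<dots> \<le> (\<Sum>a\<in>A. d * fact (card A - 1))" by (rule sum_mono) (use one in auto)
  also have "\<dots> = d * (card A * fact (card A - 1))" by simp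
  also have "card A * fact (card A - 1) = fact (card A)"
  proof -
    have "card A > 0" using False fA by (simp add: card_gt_0_iff)
    then show ?thesis using fact_reduce[of "card A", where 'a=nat] by simp
  qed
  finally show ?thesis by (simp add: U_def)
qed


lemma exists_level:
  assumes fA: "finite A" and fB: "finite B" and cAB: "card A = card B"
    and nd0: "\<forall>a\<in>A. card (B - {y. (a,y)\<in>E}) \<le> d"
  shows "\<exists>k\<le>2*d. fact (card A) \<le> 2*(2*d+1) * card {s\<in>bijs UNIV A B. card {a\<in>A. (a, s a) \<notin> E} = k}"
proof -
  define U where "U = bijs UNIV A B"
  define bd where "bd s = card {a\<in>A. (a, s a) \<notin> E}" for s :: "nat \<Rightarrow> nat"
  define S where "S k = {s\<in>U. bd s = k}" for k
  define L where "L = {s\<in>U. bd s \<le> 2*d}"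
  define H where "H = {s\<in>U. \<not> bd s \<le> 2*d}"
  have fU: "finite U" using finite_bijs fA fB by (simp add: U_def)
  have cU: "card U = fact (card A)" using card_bijs_UNIV fA fB cAB by (simp add: U_def)
  have LH: "card U = card L + card H"
  proof -
    have "U = L \<union> H" "L \<inter> H = {}" by (auto simp: L_def H_def)
    then show ?thesis using fU card_Un_disjoint[of L H] by (simp add: L_def H_def)
  qed
  have "card H * (2*d+1) \<le> (\<Sum>s\<in>H. bd s)"
    using sum_bounded_below[of H "2*d+1" bd] by (auto simp: H_def)
  also have "\<dots> \<le> (\<Sum>s\<in>U. bd s)" by (rule sum_mono2[OF fU]) (auto simp: H_def)
  also have "\<dots> \<le> d * fact (card A)"
    using markov_bad[OF fA fB cAB nd0] by (simp add: U_def bd_def)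
  finally have Hb: "card H * (2*d+1) \<le> d * fact (card A)" .
  have "(2*d+1) * (2 * card H) \<le> (2*d+1) * fact (card A)"
  proof -
    have "(2*d+1) * (2 * card H) = 2 * (card H * (2*d+1))" by simp
    also have "\<dots> \<le> 2 * (d * fact (card A))" using Hb by simp
    also have "\<dots> \<le> (2*d+1) * fact (card A)" by simp
    finally show ?thesis .
  qed
  then have "2 * card H \<le> fact (card A)" by (simp only: mult_le_cancel1)
  then have L2: "fact (card A) \<le> 2 * card L" using LH cU by linarith
  define g where "g k = card (S k)" for k
  obtain k0 where k0: "k0 \<in> {..2*d}" and kmax: "\<forall>k\<in>{..2*d}. g k \<le> g k0"
  proof -
    have "Max (g ` {..2*d}) \<in> g ` {..2*d}" by (rule Max_in) auto
    then obtain k0 where "k0 \<in> {..2*d}" "g k0 = Max (g ` {..2*d})" by (metis imageE)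
    moreover have "\<forall>k\<in>{..2*d}. g k \<le> Max (g ` {..2*d})" by auto
    ultimately show ?thesis using that by auto
  qed
  have "L \<subseteq> (\<Union>k\<in>{..2*d}. S k)" by (auto simp: L_def S_def)
  then have "card L \<le> card (\<Union>k\<in>{..2*d}. S k)" by (rule card_mono[rotated]) (use fU in \<open>auto simp: S_def\<close>)
  also have "\<dots> \<le> (\<Sum>k\<in>{..2*d}. card (S k))" by (rule card_UN_le) auto
  also have "\<dots> \<le> (\<Sum>k\<in>{..2*d}. g k0)" by (rule sum_mono) (use kmax in \<open>auto simp: g_def\<close>)
  also have "\<dots> = (2*d+1) * g k0" by simp
  finally have "card L \<le> (2*d+1) * g k0" .
  then have "fact (card A) \<le> 2*(2*d+1) * g k0" using L2 by linarith
  then show ?thesis using k0 by (auto simp: g_def S_def U_def bd_def)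
qed


lemma lower:
  assumes fA: "finite A" and fB: "finite B" and cAB: "card A = card B"
    and nd0: "\<forall>a\<in>A. card (B - {y. (a,y)\<in>E}) \<le> d"
    and nd1: "\<forall>b\<in>B. card (A - {x. (x,b)\<in>E}) \<le> d"
  shows "\<exists>k\<le>2*d. fact (card A) * (\<Prod>j<k. card A - k - 2*d - j)
           \<le> 2*(2*d+1) * (card (bijs E A B) * ((card A choose k) * card A ^ k))"
proof -
  define U where "U = bijs UNIV A B"
  define Bd where "Bd s = {a\<in>A. (a, s a) \<notin> E}" for s :: "nat \<Rightarrow> nat"
  obtain k where k: "k \<le> 2*d" and kS: "fact (card A) \<le> 2*(2*d+1) * card {s\<in>U. card (Bd s) = k}"
    using exists_level[OF fA fB cAB nd0] by (auto simp: U_def Bd_def)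
  define Sk where "Sk = {s\<in>U. card (Bd s) = k}"
  define Cand where "Cand s a = {x\<in>A - Bd s. (a, s x)\<in>E \<and> (x, s a)\<in>E}" for s :: "nat \<Rightarrow> nat" and a
  define Valid where "Valid s = {f \<in> Bd s \<rightarrow>\<^sub>E A. inj_on f (Bd s) \<and> (\<forall>a\<in>Bd s. f a \<in> Cand s a)}"
    for s :: "nat \<Rightarrow> nat"
  define P where "P = Sigma Sk Valid"
  define m where "m = card A - k - 2*d"
  have fU: "finite U" using finite_bijs fA fB by (simp add: U_def)
  have fSk: "finite Sk" using fU by (simp add: Sk_def)
  have fV: "finite (Valid s)" for s
  proof -
    have "finite (Bd s \<rightarrow>\<^sub>E A)" by (rule finite_PiE) (use fA in \<open>auto simp: Bd_def\<close>)
    then show ?thesis unfolding Valid_def by (rule finite_subset[rotated]) auto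
  qed
  have sU: "bij_betw s A B" "s \<in> A \<rightarrow>\<^sub>E B" if "s \<in> U" for s using that by (auto simp: U_def bijs_def)
  have cand_card: "m \<le> card (Cand s a)" if s: "s \<in> Sk" and a: "a \<in> A" for s a
  proof -
    have injs: "inj_on s A" using sU[of s] s by (auto simp: Sk_def bij_betw_def)
    have saB: "s a \<in> B" using sU[of s] s a by (auto simp: Sk_def PiE_iff)
    have sub: "A - Cand s a \<subseteq> (Bd s \<union> {x\<in>A. s x \<in> B - {y. (a,y)\<in>E}}) \<union> (A - {x. (x, s a)\<in>E})"
    proof
      fix x assume x: "x \<in> A - Cand s a"
      then have "s x \<in> B" using sU[of s] s by (auto simp: Sk_def PiE_iff)
      then show "x \<in> (Bd s \<union> {x\<in>A. s x \<in> B - {y. (a,y)\<in>E}}) \<union> (A - {x. (x, s a)\<in>E})"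
        using x by (auto simp: Cand_def)
    qed
    have "card (A - Cand s a) \<le> card (Bd s \<union> {x\<in>A. s x \<in> B - {y. (a,y)\<in>E}}) + card (A - {x. (x, s a)\<in>E})"
      by (rule order.trans[OF card_mono card_Un_le]) (use sub fA in \<open>auto simp: Bd_def\<close>)
    also have "\<dots> \<le> (card (Bd s) + card {x\<in>A. s x \<in> B - {y. (a,y)\<in>E}}) + card (A - {x. (x, s a)\<in>E})"
      using card_Un_le by (rule add_right_mono)
    also have "\<dots> \<le> (k + d) + d"
      using s card_preimage_le[OF injs, of "B - {y. (a,y)\<in>E}"] fB nd0 a nd1 saB
      by (intro add_mono) (auto simp: Sk_def)
    finally have c1: "card (A - Cand s a) \<le> k + 2*d" by simp
    have "A = Cand s a \<union> (A - Cand s a)" by (auto simp: Cand_def)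
    then have "card A = card (Cand s a \<union> (A - Cand s a))" by simp
    then have "card A \<le> card (Cand s a) + card (A - Cand s a)" using card_Un_le by metis
    then show ?thesis using c1 by (simp add: m_def)
  qed
  have valid_card: "(\<Prod>j<k. m - j) \<le> card (Valid s)" if s: "s \<in> Sk" for s
  proof -
    have fBd: "finite (Bd s)" using fA by (simp add: Bd_def)
    have "(\<Prod>j<card (Bd s). m - j) \<le> card (Valid s)"
      unfolding Valid_def
      by (rule count_inj[OF fBd fA]) (use cand_card[OF s] in \<open>auto simp: Bd_def Cand_def\<close>)
    then show ?thesis using s by (simp add: Sk_def)
  qed
  have a: "card Sk * (\<Prod>j<k. m - j) \<le> card P"
  proof -
    have "card Sk * (\<Prod>j<k. m - j) \<le> (\<Sum>s\<in>Sk. card (Valid s))"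
      using sum_bounded_below[of Sk "\<Prod>j<k. m - j" "\<lambda>s. card (Valid s)"] valid_card
      by (simp add: mult.commute)
    also have "\<dots> = card P" unfolding P_def by (rule card_SigmaI[symmetric]) (use fSk fV in auto)
    finally show ?thesis .
  qed
  have b: "card P \<le> card (bijs E A B) * ((card A choose k) * card A ^ k)"
  proof -
    define Ds where "Ds = {D. D \<subseteq> A \<and> card D = k}"
    define T where "T = bijs E A B \<times> Sigma Ds (\<lambda>D. D \<rightarrow>\<^sub>E A)"
    define Phi where "Phi p = (restrict (fst p \<circ> swp (Bd (fst p)) (snd p)) A, Bd (fst p), snd p)"
      for p :: "(nat \<Rightarrow> nat) \<times> (nat \<Rightarrow> nat)"
    have fDs: "finite Ds" using fA by (simp add: Ds_def)
    have fPi: "finite (D \<rightarrow>\<^sub>E A)" if "D \<in> Ds" for D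
      by (rule finite_PiE) (use that fA finite_subset in \<open>auto simp: Ds_def\<close>)
    have cPi: "card (D \<rightarrow>\<^sub>E A) = card A ^ k" if "D \<in> Ds" for D
      using that fA finite_subset[of D A] by (auto simp: Ds_def card_PiE)
    have cSig: "card (Sigma Ds (\<lambda>D. D \<rightarrow>\<^sub>E A)) = (card A choose k) * card A ^ k"
    proof -
      have "card (Sigma Ds (\<lambda>D. D \<rightarrow>\<^sub>E A)) = (\<Sum>D\<in>Ds. card (D \<rightarrow>\<^sub>E A))"
        by (rule card_SigmaI) (use fDs fPi in auto)
      also have "\<dots> = (\<Sum>D\<in>Ds. card A ^ k)" by (rule sum.cong) (use cPi in auto)
      also have "\<dots> = card Ds * card A ^ k" by simp
      also have "card Ds = card A choose k" using n_subsets[OF fA] by (simp add: Ds_def)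
      finally show ?thesis .
    qed
    have fT: "finite T" unfolding T_def
      by (rule finite_cartesian_product[OF finite_bijs[OF fA fB]], rule finite_SigmaI[OF fDs fPi])
    have cT: "card T = card (bijs E A B) * ((card A choose k) * card A ^ k)"
      unfolding T_def card_cartesian_product cSig ..
    have props: "Phi p \<in> T" "\<forall>x\<in>A. swp (Bd (fst p)) (snd p) x \<in> A"
       "\<forall>x. swp (Bd (fst p)) (snd p) (swp (Bd (fst p)) (snd p) x) = x"
      if p: "p \<in> P" for p
    proof -
      obtain s f where pf: "p = (s, f)" by (cases p)
      have s: "s \<in> Sk" and f: "f \<in> Valid s" using p pf by (auto simp: P_def)
      have sU': "s \<in> U" using s by (simp add: Sk_def)
      have DA: "Bd s \<subseteq> A" by (auto simp: Bd_def)
      have fE: "f \<in> Bd s \<rightarrow>\<^sub>E A" and finj: "inj_on f (Bd s)" and fC: "\<forall>a\<in>Bd s. f a \<in> Cand s a"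
        using f by (auto simp: Valid_def)
      have fAD: "\<forall>x\<in>Bd s. f x \<in> A - Bd s" using fC by (auto simp: Cand_def)
      note sw = swp_props[OF DA fAD finj]
      show "\<forall>x\<in>A. swp (Bd (fst p)) (snd p) x \<in> A" using sw(1) pf by simp
      show "\<forall>x. swp (Bd (fst p)) (snd p) (swp (Bd (fst p)) (snd p) x) = x" using sw(2) pf by simp
      define M where "M = restrict (s \<circ> swp (Bd s) f) A"
      have bc: "bij_betw (s \<circ> swp (Bd s) f) A B" by (rule bij_betw_trans[OF sw(3) sU(1)[OF sU']])
      have bM: "bij_betw M A B" unfolding M_def
        by (rule bij_betw_cong[THEN iffD1, OF _ bc]) simp
      have ME: "M \<in> A \<rightarrow>\<^sub>E B" using bM unfolding M_def bij_betw_def by auto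
      have Medge: "\<forall>x\<in>A. (x, M x) \<in> E"
      proof
        fix x assume x: "x \<in> A"
        show "(x, M x) \<in> E"
        proof (cases "x \<in> Bd s")
          case True
          then have "M x = s (f x)" using x by (simp add: M_def swp_def)
          then show ?thesis using fC True by (auto simp: Cand_def)
        next
          case False
          show ?thesis
          proof (cases "x \<in> f ` Bd s")
            case True
            then obtain a where a: "a \<in> Bd s" "x = f a" by auto
            have "inv_into (Bd s) f x = a" using a finj by simp
            then have "M x = s a" using x False True by (simp add: M_def swp_def)
            then show ?thesis using fC a by (auto simp: Cand_def)
          next
            case False2: False
            then have "M x = s x" using x False by (simp add: M_def swp_def)
            then show ?thesis using False x by (simp add: Bd_def)
          qed
        qed
      qed
      have "M \<in> bijs E A B" using bM ME Medge by (simp add: bijs_def)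
      moreover have "Bd s \<in> Ds" using s by (auto simp: Ds_def Sk_def Bd_def)
      moreover have "f \<in> Bd s \<rightarrow>\<^sub>E A" by (rule fE)
      ultimately show "Phi p \<in> T" unfolding T_def Phi_def pf M_def by simp
    qed
    have "card P \<le> card T"
    proof (rule card_inj_on_le[OF _ _ fT])
      show "Phi ` P \<subseteq> T" using props(1) by auto
      show "inj_on Phi P"
      proof (rule inj_onI)
        fix p q assume p: "p \<in> P" and q: "q \<in> P" and e: "Phi p = Phi q"
        obtain s1 f1 where p': "p = (s1, f1)" by (cases p)
        obtain s2 f2 where q': "q = (s2, f2)" by (cases q)
        have Bd: "Bd s1 = Bd s2" and ff: "f1 = f2" and
          rr: "restrict (s1 \<circ> swp (Bd s1) f1) A = restrict (s2 \<circ> swp (Bd s2) f2) A"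
          using e p' q' by (auto simp: Phi_def)
        have inA: "\<forall>x\<in>A. swp (Bd s1) f1 x \<in> A" and inv: "\<forall>x. swp (Bd s1) f1 (swp (Bd s1) f1 x) = x"
          using props(2,3)[OF p] p' by auto
        have e1: "s1 \<in> extensional A" "s2 \<in> extensional A"
          using p q p' q' sU by (auto simp: P_def Sk_def PiE_def)
        have "s1 = s2"
        proof
          fix x show "s1 x = s2 x"
          proof (cases "x \<in> A")
            case True
            have "restrict (s1 \<circ> swp (Bd s1) f1) A (swp (Bd s1) f1 x)
                = restrict (s2 \<circ> swp (Bd s2) f2) A (swp (Bd s1) f1 x)" using rr by simp
            then show ?thesis using True inA inv Bd ff by auto
          next
            case False then show ?thesis using e1 by (auto simp: extensional_def)
          qed
        qed
        then show "p = q" using p' q' ff by simp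
      qed
    qed
    then show ?thesis using cT by simp
  qed
  have "fact (card A) * (\<Prod>j<k. m - j) \<le> 2*(2*d+1) * card Sk * (\<Prod>j<k. m - j)"
    using kS by (simp add: Sk_def)
  also have "\<dots> \<le> 2*(2*d+1) * card P"
    using mult_left_mono[OF a, of "2*(2*d+1)"] by (simp only: mult.assoc)
  also have "\<dots> \<le> 2*(2*d+1) * (card (bijs E A B) * ((card A choose k) * card A ^ k))"
    using b by (rule mult_left_mono) simp
  finally show ?thesis using k by (auto simp: m_def)
qed


lemma restrictT:
  assumes fA: "finite A" and fB: "finite B" and TAB: "T \<subseteq> A \<times> B"
    and i1: "inj_on fst T" and i2: "inj_on snd T"
  shows "card {s\<in>bijs E A B. \<forall>(x,y)\<in>T. s x = y} \<le> card (bijs E (A - fst ` T) (B - snd ` T))"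
proof (rule card_inj_on_le[OF _ _ finite_bijs])
  define X where "X = fst ` T"
  define Y where "Y = snd ` T"
  have XA: "X \<subseteq> A" "Y \<subseteq> B" using TAB by (auto simp: X_def Y_def)
  show "(\<lambda>s. restrict s (A - fst ` T)) ` {s\<in>bijs E A B. \<forall>(x,y)\<in>T. s x = y} \<subseteq> bijs E (A - fst ` T) (B - snd ` T)"
  proof
    fix r assume "r \<in> (\<lambda>s. restrict s (A - fst ` T)) ` {s\<in>bijs E A B. \<forall>(x,y)\<in>T. s x = y}"
    then obtain s where s: "s \<in> bijs E A B" "\<forall>(x,y)\<in>T. s x = y" and r: "r = restrict s (A - X)"
      by (auto simp: X_def)
    have bs: "bij_betw s A B" using s by (auto simp: bijs_def)
    have "s ` X = Y"
    proof
      show "s ` X \<subseteq> Y"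
      proof
        fix z assume "z \<in> s ` X"
        then obtain x y where xy: "(x,y) \<in> T" "z = s x" by (auto simp: X_def)
        then have "z = y" using s(2) by auto
        then show "z \<in> Y" using xy by (force simp: Y_def)
      qed
      show "Y \<subseteq> s ` X"
      proof
        fix y assume "y \<in> Y"
        then obtain x where "(x,y) \<in> T" by (auto simp: Y_def)
        then show "y \<in> s ` X" using s(2) by (force simp: X_def)
      qed
    qed
    then have bX: "bij_betw s X Y" using bs XA by (auto simp: bij_betw_def intro: inj_on_subset)
    have b2: "bij_betw s (A - X) (B - Y)" by (rule bij_betw_DiffI[OF bs bX XA])
    then have b3: "bij_betw r (A - X) (B - Y)" unfolding r
      by (rule bij_betw_cong[THEN iffD1, rotated]) auto
    have "r \<in> (A - X) \<rightarrow>\<^sub>E (B - Y)" using b3 unfolding r bij_betw_def by auto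
    moreover have "\<forall>x\<in>A - X. (x, r x) \<in> E" using s(1) unfolding r bijs_def by auto
    ultimately show "r \<in> bijs E (A - fst ` T) (B - snd ` T)" using b3 by (simp add: bijs_def X_def Y_def)
  qed
  show "inj_on (\<lambda>s. restrict s (A - fst ` T)) {s\<in>bijs E A B. \<forall>(x,y)\<in>T. s x = y}"
  proof (rule inj_onI)
    fix s1 s2 assume s1: "s1 \<in> {s\<in>bijs E A B. \<forall>(x,y)\<in>T. s x = y}" and s2: "s2 \<in> {s\<in>bijs E A B. \<forall>(x,y)\<in>T. s x = y}"
      and e: "restrict s1 (A - fst ` T) = restrict s2 (A - fst ` T)"
    show "s1 = s2"
    proof
      fix x show "s1 x = s2 x"
      proof (cases "x \<in> fst ` T")
        case True
        then obtain y where "(x,y) \<in> T" by force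
        then show ?thesis using s1 s2 by auto
      next
        case False
        show ?thesis
        proof (cases "x \<in> A")
          case True
          then show ?thesis using fun_cong[OF e, of x] False by simp
        next
          case False2: False
          have "s1 \<in> extensional A" "s2 \<in> extensional A" using s1 s2 by (auto simp: bijs_def PiE_def)
          then show ?thesis using False2 by (auto simp: extensional_def)
        qed
      qed
    qed
  qed
qed (use fA fB in auto)

lemma four_pow: "1 \<le> n \<Longrightarrow> 2 * (n + 1) \<le> (4::nat) ^ n"
proof (induction n)
  case 0 then show ?case by simp
next
  case (Suc n)
  show ?case
  proof (cases "n = 0")
    case True then show ?thesis by simp
  next
    case False
    then have "2 * (n + 1) \<le> 4 ^ n" using Suc.IH by simp
    then show ?thesis by simp
  qed
qed

lemma pow_le_exp_fact: "real n ^ n \<le> exp (real n) * fact n"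
proof -
  have "(\<Sum>i\<in>{n}. real n ^ i / fact i) \<le> (\<Sum>i. real n ^ i / fact i)"
    by (rule sum_le_suminf) (use summable_exp_generic[of "real n"] in \<open>auto simp: divide_inverse mult.commute\<close>)
  also have "\<dots> = exp (real n)" by (simp add: exp_def scaleR_conv_of_real divide_inverse mult.commute)
  finally have "real n ^ n / fact n \<le> exp (real n)" by simp
  then show ?thesis by (simp add: divide_le_eq)
qed


lemma N_lower:
  assumes fA: "finite A" and fB: "finite B" and cA: "card A = I" and cB: "card B = I" and I1: "1 \<le> I"
    and nd0: "\<forall>a\<in>A. card (B - {y. (a,y)\<in>E}) \<le> d"
    and nd1: "\<forall>b\<in>B. card (A - {x. (x,b)\<in>E}) \<le> d"
    and dI: "100 * d \<le> I"
  shows "real (fact I) \<le> 16 ^ I * real (card (bijs E A B))"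
proof -
  define N where "N = card (bijs E A B)"
  obtain k where k: "k \<le> 2*d" and lo: "fact I * (\<Prod>j<k. I - k - 2*d - j) \<le> 2*(2*d+1) * (N * ((I choose k) * I ^ k))"
    using lower[OF fA fB _ nd0 nd1] cA cB by (auto simp: N_def)
  have Ipos: "real I > 0" using I1 by simp
  have pr: "(real I / 2) ^ k \<le> real (\<Prod>j<k. I - k - 2*d - j)"
  proof -
    have "(real I / 2) ^ k = (\<Prod>j<k. real I / 2)" by simp
    also have "\<dots> \<le> (\<Prod>j<k. real (I - k - 2*d - j))"
    proof (rule prod_mono)
      fix j assume j: "j \<in> {..<k}"
      have "k + 2*d + j \<le> I" using j k dI by auto
      then have "real (I - k - 2*d - j) = real I - k - 2*d - j" by (simp add: of_nat_diff)
      also have "\<dots> \<ge> real I / 2" using j k dI by simp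
      finally show "0 \<le> real I / 2 \<and> real I / 2 \<le> real (I - k - 2*d - j)" by simp
    qed
    also have "\<dots> = real (\<Prod>j<k. I - k - 2*d - j)" by simp
    finally show ?thesis .
  qed
  have c1: "real (2*(2*d+1)) \<le> 4 ^ I"
  proof -
    have "2*(2*d+1) \<le> 2*(I+1)" using dI by simp
    also have "\<dots> \<le> 4 ^ I" using four_pow[OF I1] .
    finally have "real (2*(2*d+1)) \<le> real ((4::nat)^I)" by (rule of_nat_mono)
    then show ?thesis by simp
  qed
  have c2: "real (I choose k) \<le> 2 ^ I"
  proof -
    have "real (I choose k) \<le> real ((2::nat)^I)" using binomial_le_pow2[of I k] by (rule of_nat_mono)
    then show ?thesis by simp
  qed
  have c3: "(2::real) ^ k \<le> 2 ^ I" by (rule power_increasing) (use k dI in auto)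
  have "real (fact I) * (real I / 2) ^ k \<le> real (fact I) * real (\<Prod>j<k. I - k - 2*d - j)"
    using pr by (rule mult_left_mono) simp
  also have "\<dots> \<le> real (2*(2*d+1)) * (real N * (real (I choose k) * real I ^ k))"
  proof -
    have "real (fact I * (\<Prod>j<k. I - k - 2*d - j)) \<le> real (2*(2*d+1) * (N * ((I choose k) * I ^ k)))"
      using lo by (rule of_nat_mono)
    then show ?thesis by (simp only: of_nat_mult of_nat_power of_nat_fact)
  qed
  also have "\<dots> \<le> 4 ^ I * (real N * (2 ^ I * real I ^ k))"
    by (intro mult_mono c1 c2 order.refl mult_nonneg_nonneg) auto
  finally have "real (fact I) * (real I / 2) ^ k * 2 ^ k \<le> 4 ^ I * (real N * (2 ^ I * real I ^ k)) * 2 ^ k"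
    by simp
  then have "real (fact I) * real I ^ k \<le> (4 ^ I * real N * 2 ^ I * 2 ^ k) * real I ^ k"
    by (simp add: power_divide mult_ac)
  then have "real (fact I) \<le> 4 ^ I * real N * 2 ^ I * 2 ^ k" using Ipos by simp
  also have "\<dots> \<le> 4 ^ I * real N * 2 ^ I * 2 ^ I" using c3 by (intro mult_left_mono) auto
  also have "\<dots> = 16 ^ I * real N" by (simp add: power_mult_distrib[symmetric])
  finally show ?thesis by (simp add: N_def)
qed


lemma main_bound:
  assumes fA: "finite A" and fB: "finite B" and cA: "card A = I" and cB: "card B = I" and I1: "1 \<le> I"
    and nd0: "\<forall>a\<in>A. card (B - {y. (a,y)\<in>E}) \<le> d"
    and nd1: "\<forall>b\<in>B. card (A - {x. (x,b)\<in>E}) \<le> d"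
    and dI: "100 * d \<le> I"
    and TAB: "T \<subseteq> A \<times> B" and i1: "inj_on fst T" and i2: "inj_on snd T" and t1: "1 \<le> card T"
  shows "real (card {s\<in>bijs E A B. \<forall>(x,y)\<in>T. s x = y}) / real (card (bijs E A B))
           \<le> ((16 * exp 1)^2 / real I) ^ card T"
proof -
  define K :: real where "K = 16 * exp 1"
  define N where "N = card (bijs E A B)"
  define c where "c = card {s\<in>bijs E A B. \<forall>(x,y)\<in>T. s x = y}"
  define t where "t = card T"
  define X where "X = fst ` T"
  define Y where "Y = snd ` T"
  have K1: "K \<ge> 16" unfolding K_def using exp_ge_add_one_self[of 1] by simp
  have Ipos: "real I > 0" using I1 by simp
  have NL: "real (fact I) \<le> 16 ^ I * real N"
    using N_lower[OF fA fB cA cB I1 nd0 nd1 dI] by (simp add: N_def)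
  have Npos: "real N > 0"
  proof -
    have "0 < real (fact I)" by simp
    then have "0 < 16 ^ I * real N" using NL by linarith
    then show ?thesis by (simp add: zero_less_mult_iff)
  qed
  have XA: "X \<subseteq> A" "Y \<subseteq> B" using TAB by (auto simp: X_def Y_def)
  have cX: "card X = t" "card Y = t" using card_image[OF i1] card_image[OF i2] by (auto simp: X_def Y_def t_def)
  have fX: "finite X" "finite Y" using XA fA fB finite_subset by auto
  have tI: "t \<le> I" using card_mono[OF fA XA(1)] cX cA by simp
  have cc: "c \<le> card (bijs E (A - X) (B - Y))"
    using restrictT[OF fA fB TAB i1 i2, of E] by (simp add: c_def X_def Y_def)
  have cAX: "card (A - X) = I - t" "card (B - Y) = I - t"
    using card_Diff_subset[OF fX(1) XA(1)] card_Diff_subset[OF fX(2) XA(2)] cX cA cB by auto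
  show ?thesis
  proof (cases "2 * t \<le> I")
    case True
    have ch: "card (bijs E (A - X) (B - Y)) * (\<Prod>j<t. card A - 1 - 2*d - j) \<le> N"
      using chain[OF fA fB _ nd0 nd1 XA cX] cA cB by (simp add: N_def)
    have pr: "(real I / 4) ^ t \<le> real (\<Prod>j<t. card A - 1 - 2*d - j)"
    proof -
      have "(real I / 4) ^ t = (\<Prod>j<t. real I / 4)" by simp
      also have "\<dots> \<le> (\<Prod>j<t. real (card A - 1 - 2*d - j))"
      proof (rule prod_mono)
        fix j assume j: "j \<in> {..<t}"
        have "1 + 2*d + j \<le> I" using j True dI by auto
        then have "real (card A - 1 - 2*d - j) = real I - 1 - 2*d - j" using cA by (simp add: of_nat_diff)
        also have "\<dots> \<ge> real I / 4" using j True dI by simp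
        finally show "0 \<le> real I / 4 \<and> real I / 4 \<le> real (card A - 1 - 2*d - j)" by simp
      qed
      also have "\<dots> = real (\<Prod>j<t. card A - 1 - 2*d - j)" by simp
      finally show ?thesis .
    qed
    have "real c * (real I / 4) ^ t \<le> real (card (bijs E (A - X) (B - Y))) * real (\<Prod>j<t. card A - 1 - 2*d - j)"
      using cc pr by (intro mult_mono) auto
    also have "\<dots> \<le> real N"
    proof -
      have "real (card (bijs E (A - X) (B - Y)) * (\<Prod>j<t. card A - 1 - 2*d - j)) \<le> real N"
        using ch by (rule of_nat_mono)
      then show ?thesis by simp
    qed
    finally have "real c * (real I / 4) ^ t \<le> real N" .
    then have "real c / real N \<le> 1 / (real I / 4) ^ t"
      using Npos Ipos by (simp add: field_simps)
    also have "\<dots> = (4 / real I) ^ t" by (simp add: power_divide)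
    also have "\<dots> \<le> (K^2 / real I) ^ t"
    proof (rule power_mono)
      have "(16::real) * 16 \<le> K * K" using K1 by (intro mult_mono) auto
      then have "(4::real) \<le> K^2" by (simp add: power2_eq_square)
      then show "4 / real I \<le> K^2 / real I" using Ipos by (simp add: divide_right_mono)
    qed (use Ipos in simp)
    finally show ?thesis by (simp add: K_def c_def N_def t_def)
  next
    case False
    have c2: "c \<le> fact (I - t)"
      using cc card_bijs_le[of "A - X" "B - Y" E] cAX fA fB by simp
    have "real (fact (I - t)) * real I ^ t \<le> real I ^ (I - t) * real I ^ t"
    proof (rule mult_right_mono)
      have "real (fact (I - t)) = (fact (I - t) :: real)" by simp
      also have "\<dots> \<le> real ((I - t) ^ (I - t))" by (rule fact_le_power)
      also have "\<dots> \<le> real I ^ (I - t)" by (simp add: power_mono)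
      finally show "real (fact (I - t)) \<le> real I ^ (I - t)" .
    qed simp
    also have "\<dots> = real I ^ I" using tI by (simp add: power_add[symmetric])
    also have "\<dots> \<le> exp (real I) * real (fact I)" using pow_le_exp_fact[of I] by simp
    also have "\<dots> \<le> exp (real I) * (16 ^ I * real N)" using NL by (intro mult_left_mono) auto
    finally have A1: "real (fact (I - t)) * real I ^ t \<le> exp (real I) * 16 ^ I * real N" by simp
    have c2': "real c \<le> real (fact (I - t))" using c2 by (rule of_nat_mono)
    have "real c * real I ^ t \<le> real (fact (I - t)) * real I ^ t"
      using c2' by (intro mult_right_mono) auto
    also have "\<dots> \<le> exp (real I) * 16 ^ I * real N" by (rule A1)
    also have "exp (real I) * 16 ^ I * real N \<le> (K^2) ^ t * real N"
    proof (rule mult_right_mono)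
      have "exp (real I) * 16 ^ I = K ^ I"
        unfolding K_def power_mult_distrib using exp_of_nat_mult[of I 1] by (simp add: mult.commute)
      also have "K ^ I \<le> K ^ (2 * t)" by (rule power_increasing) (use False K1 in auto)
      also have "K ^ (2 * t) = (K^2) ^ t" by (simp add: power_mult)
      finally show "exp (real I) * 16 ^ I \<le> (K^2) ^ t" .
    qed simp
    finally have "real c * real I ^ t \<le> (K^2) ^ t * real N" .
    then have "real c / real N \<le> (K^2) ^ t / real I ^ t"
      using Npos Ipos by (simp add: field_simps)
    also have "\<dots> = (K^2 / real I) ^ t" by (simp add: power_divide)
    finally show ?thesis by (simp add: K_def c_def N_def t_def)
  qed
qed


lemma nondeg:
  assumes fB: "finite B" and sub: "{y. (a,y)\<in>E} \<subseteq> B" and cB: "card B = I"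
    and deg: "real (card {y. (a,y)\<in>E}) \<ge> (1 - lam) * real I"
  shows "card (B - {y. (a,y)\<in>E}) \<le> nat \<lfloor>lam * real I\<rfloor>"
proof (rule le_nat_floor)
  have c: "card (B - {y. (a,y)\<in>E}) = I - card {y. (a,y)\<in>E}"
    using card_Diff_subset[OF finite_subset[OF sub fB] sub] cB by simp
  have "card {y. (a,y)\<in>E} \<le> I" using card_mono[OF fB sub] cB by simp
  then have "real (card (B - {y. (a,y)\<in>E})) = real I - real (card {y. (a,y)\<in>E})"
    using c by (simp add: of_nat_diff)
  also have "\<dots> \<le> lam * real I" using deg by (simp add: algebra_simps)
  finally show "real (card (B - {y. (a,y)\<in>E})) \<le> lam * real I" .
qed

theorem corollary3p4:
  "\<exists>lam0::real. lam0 > 0 \<and> (\<exists>C::real. C > 0 \<and>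
     (\<forall>lam::real. \<forall>I::nat. \<forall>V0 V1 :: nat set. \<forall>E :: (nat \<times> nat) set.
        0 < lam \<and> lam \<le> lam0 \<and> bip_graph V0 V1 E \<and> card V0 = I \<and> card V1 = I \<and>
        (\<forall>a\<in>V0. real (deg0 E a) \<ge> (1 - lam) * real I) \<and>
        (\<forall>b\<in>V1. real (deg1 E b) \<ge> (1 - lam) * real I)
        \<longrightarrow> (\<exists>p :: (nat \<times> nat) set pmf.
               (\<forall>M\<in>set_pmf p. perfect_matching V0 V1 E M) \<and>
               (\<forall>T. T \<subseteq> E \<longrightarrow>
                  measure_pmf.prob p {M. T \<subseteq> M} \<le> (C / real I) ^ card T))))"
proof (rule exI[of _ "1/100"], rule conjI, simp, rule exI[of _ "(16 * exp 1)^2"], rule conjI, simp,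
       intro allI impI)
  fix lam :: real and I :: nat and V0 V1 :: "nat set" and E :: "(nat \<times> nat) set"
  assume H: "0 < lam \<and> lam \<le> 1/100 \<and> bip_graph V0 V1 E \<and> card V0 = I \<and> card V1 = I \<and>
        (\<forall>a\<in>V0. real (deg0 E a) \<ge> (1 - lam) * real I) \<and>
        (\<forall>b\<in>V1. real (deg1 E b) \<ge> (1 - lam) * real I)"
  then have lam: "0 < lam" "lam \<le> 1/100" and fA: "finite V0" and fB: "finite V1"
    and EAB: "E \<subseteq> V0 \<times> V1" and cA: "card V0 = I" and cB: "card V1 = I"
    and dg0: "\<forall>a\<in>V0. real (deg0 E a) \<ge> (1 - lam) * real I"
    and dg1: "\<forall>b\<in>V1. real (deg1 E b) \<ge> (1 - lam) * real I"
    by (auto simp: bip_graph_def)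
  define d where "d = nat \<lfloor>lam * real I\<rfloor>"
  define C :: real where "C = (16 * exp 1)^2"
  have nd0: "\<forall>a\<in>V0. card (V1 - {y. (a,y)\<in>E}) \<le> d"
  proof
    fix a assume a: "a \<in> V0"
    show "card (V1 - {y. (a,y)\<in>E}) \<le> d" unfolding d_def
      by (rule nondeg[OF fB _ cB]) (use EAB dg0 a in \<open>auto simp: deg0_def\<close>)
  qed
  have nd1: "\<forall>b\<in>V1. card (V0 - {x. (x,b)\<in>E}) \<le> d"
  proof
    fix b assume b: "b \<in> V1"
    have "card (V0 - {y. (b,y) \<in> converse E}) \<le> nat \<lfloor>lam * real I\<rfloor>"
      by (rule nondeg[OF fA _ cA]) (use EAB dg1 b in \<open>auto simp: deg1_def\<close>)
    then show "card (V0 - {x. (x,b)\<in>E}) \<le> d" by (simp add: d_def)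
  qed
  have dI: "100 * d \<le> I"
  proof -
    have "real d \<le> lam * real I" unfolding d_def using lam by simp
    also have "\<dots> \<le> (1/100) * real I" using lam by (intro mult_right_mono) auto
    also have "\<dots> = real I / 100" by simp
    finally show ?thesis by simp
  qed
  define S where "S = bijs E V0 V1"
  have fS: "finite S" using finite_bijs[OF fA fB] by (simp add: S_def)
  have Sne: "S \<noteq> {}"
  proof (cases "I = 0")
    case True
    then have "V0 = {}" "V1 = {}" using cA cB fA fB by auto
    then have "(\<lambda>_. undefined) \<in> S" by (auto simp: S_def bijs_def bij_betw_def)
    then show ?thesis by auto
  next
    case False
    have "real (fact I) \<le> 16 ^ I * real (card S)"
      using N_lower[OF fA fB cA cB _ nd0 nd1 dI] False by (simp add: S_def)
    moreover have "0 < real (fact I)" by simp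
    ultimately have "0 < 16 ^ I * real (card S)" by linarith
    then have "card S \<noteq> 0" by (auto simp: zero_less_mult_iff)
    then show ?thesis by auto
  qed
  define gr where "gr s = (\<lambda>x. (x, s x)) ` V0" for s :: "nat \<Rightarrow> nat"
  define p where "p = map_pmf gr (pmf_of_set S)"
  show "\<exists>p :: (nat \<times> nat) set pmf.
               (\<forall>M\<in>set_pmf p. perfect_matching V0 V1 E M) \<and>
               (\<forall>T. T \<subseteq> E \<longrightarrow>
                  measure_pmf.prob p {M. T \<subseteq> M} \<le> ((16 * exp 1)^2 / real I) ^ card T)"
  proof (intro exI[of _ p] conjI allI impI ballI)
    fix M assume "M \<in> set_pmf p"
    then obtain s where s: "s \<in> S" and M: "M = gr s" using fS Sne by (auto simp: p_def)
    have bs: "bij_betw s V0 V1" and se: "\<forall>a\<in>V0. (a, s a) \<in> E" using s by (auto simp: S_def bijs_def)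
    show "perfect_matching V0 V1 E M"
      unfolding perfect_matching_def
    proof (intro conjI ballI)
      show "M \<subseteq> E" using se by (auto simp: M gr_def)
      fix a assume "a \<in> V0"
      then show "\<exists>!b. (a, b) \<in> M" by (auto simp: M gr_def)
    next
      fix b assume b: "b \<in> V1"
      then obtain a where a: "a \<in> V0" "b = s a" using bs by (auto simp: bij_betw_def)
      show "\<exists>!a. (a, b) \<in> M"
      proof (rule ex1I[of _ a])
        show "(a, b) \<in> M" using a by (auto simp: M gr_def)
        fix a' assume "(a', b) \<in> M"
        then have "a' \<in> V0" "s a' = b" by (auto simp: M gr_def)
        then show "a' = a" using a bs by (auto simp: bij_betw_def inj_on_def)
      qed
    qed
  next
    fix T assume TE: "T \<subseteq> E"
    have TAB: "T \<subseteq> V0 \<times> V1" using TE EAB by auto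
    have prob: "measure_pmf.prob p {M. T \<subseteq> M} = real (card {s\<in>S. \<forall>(x,y)\<in>T. s x = y}) / real (card S)"
    proof -
      have "measure_pmf.prob p {M. T \<subseteq> M} = measure_pmf.prob (pmf_of_set S) (gr -` {M. T \<subseteq> M})"
        by (simp add: p_def)
      also have "\<dots> = real (card (S \<inter> gr -` {M. T \<subseteq> M})) / real (card S)"
        by (rule measure_pmf_of_set[OF Sne fS])
      also have "S \<inter> gr -` {M. T \<subseteq> M} = {s\<in>S. \<forall>(x,y)\<in>T. s x = y}"
        using TAB by (auto simp: gr_def)
      finally show ?thesis .
    qed
    show "measure_pmf.prob p {M. T \<subseteq> M} \<le> ((16 * exp 1)^2 / real I) ^ card T"
    proof (cases "card T = 0")
      case True
      then show ?thesis using measure_pmf.prob_le_1 by simp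
    next
      case False
      show ?thesis
      proof (cases "inj_on fst T \<and> inj_on snd T")
        case True
        have "T \<noteq> {}" using False by auto
        then have "V0 \<noteq> {}" using TAB by auto
        then have "0 < card V0" using fA by (simp add: card_gt_0_iff)
        then have I1: "1 \<le> I" using cA by simp
        show ?thesis unfolding prob S_def
          by (rule main_bound[OF fA fB cA cB I1 nd0 nd1 dI TAB]) (use True False in auto)
      next
        case False2: False
        have "{s\<in>S. \<forall>(x,y)\<in>T. s x = y} = {}"
        proof (rule ccontr)
          assume "{s\<in>S. \<forall>(x,y)\<in>T. s x = y} \<noteq> {}"
          then obtain s where s: "s \<in> S" "\<forall>(x,y)\<in>T. s x = y" by auto
          have injs: "inj_on s V0" using s by (auto simp: S_def bijs_def bij_betw_def)
          have "inj_on fst T"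
          proof (rule inj_onI)
            fix u v assume uv: "u \<in> T" "v \<in> T" "fst u = fst v"
            obtain x1 y1 where u: "u = (x1,y1)" by (cases u)
            obtain x2 y2 where v: "v = (x2,y2)" by (cases v)
            have "s x1 = y1" "s x2 = y2" using s(2) uv u v by auto
            then show "u = v" using uv u v by simp
          qed
          moreover have "inj_on snd T"
          proof (rule inj_onI)
            fix u v assume uv: "u \<in> T" "v \<in> T" "snd u = snd v"
            obtain x1 y1 where u: "u = (x1,y1)" by (cases u)
            obtain x2 y2 where v: "v = (x2,y2)" by (cases v)
            have "s x1 = y1" "s x2 = y2" using s(2) uv u v by auto
            moreover have "x1 \<in> V0" "x2 \<in> V0" using TAB uv u v by auto
            ultimately have "x1 = x2" using injs uv u v by (auto simp: inj_on_def)
            then show "u = v" using uv u v by simp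
          qed
          ultimately show False using False2 by simp
        qed
        then have "measure_pmf.prob p {M. T \<subseteq> M} = 0" unfolding prob by (simp only: card.empty of_nat_0 div_0)
        also have "0 \<le> ((16 * exp 1)^2 / real I) ^ card T" by simp
        finally show ?thesis .
      qed
    qed
  qed
qed

end
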